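(* Let $z\ge0$ and let $(C,F)$ be a $z$-antler in an undirected multigraph $G$. Then there exists $F'\subseteq F$ such that $(C,F')$ is a $z$-antler in $G$ and $G[F']$ has at most $\frac{|C|}{2}(z^2+2z-1)$ trees.
   Context: A feedback vertex set (FVS) of $G$ is a set $X\subseteq V(G)$ with $G-X$ acyclic (self-loops and pairs of parallel edges count as cycles); $\mathrm{fvs}(G)$ is its minimum size. For disjoint $X,Y$, $e(X,Y)$ is the number of edges between $X$ and $Y$. A feedback vertex cut (FVC) in $G$ is a pair of disjoint sets $C,F\subseteq V(G)$ such that $G[F]$ is a forest and every tree $T$ of $G[F]$ satisfies $e(V(T),V(G)\setminus(C\cup F))\le1$. An antler is a FVC $(C,F)$ with $|C|\le\mathrm{fvs}(G[C\cup F])$. For $C\subseteq V(G)$, a $C$-certificate is a subgraph $H$ of $G$ such that $C$ is a minimum FVS of $H$; it has order $z$ if every component $H'$ of $H$ satisfies $\mathrm{fvs}(H')=|C\cap V(H')|\le z$. A $z$-antler is an antler $(C,F)$ such that $G[C\cup F]$ contains a $C$-certificate of order $z$. *)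

theory Defs
  imports Complex_Main
begin

text \<open>Finite undirected multigraphs (loops and parallel edges allowed).
  Every edge e has an endpoint set endpts e of one (a self-loop) or two vertices.\<close>

record ('v, 'e) mgraph =
  verts  :: "'v set"
  edges  :: "'e set"
  endpts :: "'e \<Rightarrow> 'v set"

definition wf_mgraph :: "('v, 'e) mgraph \<Rightarrow> bool" where
  "wf_mgraph G \<longleftrightarrow> finite (verts G) \<and> finite (edges G) \<and>
     (\<forall>e\<in>edges G. endpts G e \<subseteq> verts G \<and> endpts G e \<noteq> {} \<and> card (endpts G e) \<le> 2)"

text \<open>A cycle: distinct vertices v_0..v_(k-1), distinct edges e_0..e_(k-1), k \<ge> 1,
  with e_i joining v_i and v_(i+1 mod k).  k = 1 is a self-loop, k = 2 a pair of parallel edges.\<close>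
definition is_cycle :: "('v, 'e) mgraph \<Rightarrow> 'v list \<Rightarrow> 'e list \<Rightarrow> bool" where
  "is_cycle G vs es \<longleftrightarrow> vs \<noteq> [] \<and> length es = length vs \<and> distinct vs \<and> distinct es \<and>
     set vs \<subseteq> verts G \<and> set es \<subseteq> edges G \<and>
     (\<forall>i<length vs. endpts G (es ! i) = {vs ! i, vs ! ((i + 1) mod length vs)})"

definition forest :: "('v, 'e) mgraph \<Rightarrow> bool" where
  "forest G \<longleftrightarrow> \<not> (\<exists>vs es. is_cycle G vs es)"

definition induced :: "('v, 'e) mgraph \<Rightarrow> 'v set \<Rightarrow> ('v, 'e) mgraph" where
  "induced G X = \<lparr>verts = verts G \<inter> X, edges = {e \<in> edges G. endpts G e \<subseteq> X},
                  endpts = endpts G\<rparr>"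

definition del_verts :: "('v, 'e) mgraph \<Rightarrow> 'v set \<Rightarrow> ('v, 'e) mgraph" where
  "del_verts G X = induced G (verts G - X)"

definition is_fvs :: "('v, 'e) mgraph \<Rightarrow> 'v set \<Rightarrow> bool" where
  "is_fvs G X \<longleftrightarrow> X \<subseteq> verts G \<and> forest (del_verts G X)"

definition fvs :: "('v, 'e) mgraph \<Rightarrow> nat" where
  "fvs G = Min {card X | X. is_fvs G X}"

definition min_fvs :: "('v, 'e) mgraph \<Rightarrow> 'v set \<Rightarrow> bool" where
  "min_fvs G X \<longleftrightarrow> is_fvs G X \<and> card X = fvs G"

definition adj :: "('v, 'e) mgraph \<Rightarrow> 'v \<Rightarrow> 'v \<Rightarrow> bool" where
  "adj G u v \<longleftrightarrow> (\<exists>e\<in>edges G. u \<in> endpts G e \<and> v \<in> endpts G e)"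

definition components :: "('v, 'e) mgraph \<Rightarrow> 'v set set" where
  "components G = {{v \<in> verts G. (adj G)\<^sup>*\<^sup>* u v} | u. u \<in> verts G}"

definition e_between :: "('v, 'e) mgraph \<Rightarrow> 'v set \<Rightarrow> 'v set \<Rightarrow> nat" where
  "e_between G X Y = card {e \<in> edges G. endpts G e \<inter> X \<noteq> {} \<and> endpts G e \<inter> Y \<noteq> {}}"

definition subgraph :: "('v, 'e) mgraph \<Rightarrow> ('v, 'e) mgraph \<Rightarrow> bool" where
  "subgraph H G \<longleftrightarrow> verts H \<subseteq> verts G \<and> edges H \<subseteq> edges G \<and>
     (\<forall>e\<in>edges H. endpts H e = endpts G e \<and> endpts G e \<subseteq> verts H)"

definition FVC :: "('v, 'e) mgraph \<Rightarrow> 'v set \<Rightarrow> 'v set \<Rightarrow> bool" where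
  "FVC G C F \<longleftrightarrow> C \<subseteq> verts G \<and> F \<subseteq> verts G \<and> C \<inter> F = {} \<and> forest (induced G F) \<and>
     (\<forall>T\<in>components (induced G F). e_between G T (verts G - (C \<union> F)) \<le> 1)"

definition antler :: "('v, 'e) mgraph \<Rightarrow> 'v set \<Rightarrow> 'v set \<Rightarrow> bool" where
  "antler G C F \<longleftrightarrow> FVC G C F \<and> card C \<le> fvs (induced G (C \<union> F))"

definition certificate :: "('v, 'e) mgraph \<Rightarrow> 'v set \<Rightarrow> ('v, 'e) mgraph \<Rightarrow> bool" where
  "certificate G C H \<longleftrightarrow> subgraph H G \<and> min_fvs H C"

definition certificate_of_order :: "('v, 'e) mgraph \<Rightarrow> 'v set \<Rightarrow> nat \<Rightarrow> ('v, 'e) mgraph \<Rightarrow> bool" where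
  "certificate_of_order G C z H \<longleftrightarrow> certificate G C H \<and>
     (\<forall>T\<in>components H. fvs (induced H T) = card (C \<inter> T) \<and> card (C \<inter> T) \<le> z)"

definition z_antler :: "('v, 'e) mgraph \<Rightarrow> nat \<Rightarrow> 'v set \<Rightarrow> 'v set \<Rightarrow> bool" where
  "z_antler G z C F \<longleftrightarrow> antler G C F \<and>
     (\<exists>H. certificate_of_order (induced G (C \<union> F)) C z H)"

end

theory Submission
  imports Defs
begin


definition comp_of :: "('v, 'e) mgraph \<Rightarrow> 'v \<Rightarrow> 'v set" where
  "comp_of G u = {v \<in> verts G. (adj G)\<^sup>*\<^sup>* u v}"

definition rem_edge :: "('v, 'e) mgraph \<Rightarrow> 'e \<Rightarrow> ('v, 'e) mgraph" where
  "rem_edge G e = G\<lparr>edges := edges G - {e}\<rparr>"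

lemma components_eq: "components G = comp_of G ` verts G"
  unfolding components_def comp_of_def by auto

lemma adj_sym: "adj G u v \<Longrightarrow> adj G v u"
  unfolding adj_def by auto

lemma rtranclp_adj_sym: "(adj G)\<^sup>*\<^sup>* u v \<Longrightarrow> (adj G)\<^sup>*\<^sup>* v u"
proof (induction rule: rtranclp_induct)
  case base then show ?case by simp
next
  case (step y w)
  then show ?case using adj_sym converse_rtranclp_into_rtranclp by metis
qed

lemma comp_of_eq: "v \<in> comp_of G u \<Longrightarrow> comp_of G v = comp_of G u"
  unfolding comp_of_def
  by (auto intro: rtranclp_trans dest: rtranclp_adj_sym)

lemma comp_self: "u \<in> verts G \<Longrightarrow> u \<in> comp_of G u"
  unfolding comp_of_def by auto

lemma comp_sub: "comp_of G u \<subseteq> verts G"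
  unfolding comp_of_def by auto

lemma comp_in: "T \<in> components G \<Longrightarrow> x \<in> T \<Longrightarrow> T = comp_of G x"
  unfolding components_eq using comp_of_eq by fastforce

lemma comps_disj: "T1 \<in> components G \<Longrightarrow> T2 \<in> components G \<Longrightarrow> x \<in> T1 \<Longrightarrow> x \<in> T2 \<Longrightarrow> T1 = T2"
  using comp_in by metis

lemma comp_mem: "u \<in> verts G \<Longrightarrow> comp_of G u \<in> components G"
  unfolding components_eq by auto

lemma comps_sub: "T \<in> components G \<Longrightarrow> T \<subseteq> verts G"
  unfolding components_eq using comp_sub by (auto simp: comp_of_def)

lemma comps_ne: "T \<in> components G \<Longrightarrow> T \<noteq> {}"
  unfolding components_eq using comp_self by fastforce

lemma finite_components: "finite (verts G) \<Longrightarrow> finite (components G)"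
  unfolding components_eq by simp

lemma wf_adj: "wf_mgraph G \<Longrightarrow> adj G u v \<Longrightarrow> u \<in> verts G \<and> v \<in> verts G"
  unfolding wf_mgraph_def adj_def by auto

lemma comp_closed: "wf_mgraph G \<Longrightarrow> v \<in> comp_of G u \<Longrightarrow> adj G v w \<Longrightarrow> w \<in> comp_of G u"
  unfolding comp_of_def using wf_adj by (fastforce intro: rtranclp.rtrancl_into_rtrancl)

lemma adj_mono: "edges G1 \<subseteq> edges G2 \<Longrightarrow> \<forall>e\<in>edges G1. endpts G1 e = endpts G2 e \<Longrightarrow>
   adj G1 u v \<Longrightarrow> adj G2 u v"
  unfolding adj_def by auto

lemma reach_mono: "edges G1 \<subseteq> edges G2 \<Longrightarrow> \<forall>e\<in>edges G1. endpts G1 e = endpts G2 e \<Longrightarrow>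
   (adj G1)\<^sup>*\<^sup>* u v \<Longrightarrow> (adj G2)\<^sup>*\<^sup>* u v"
  by (metis (no_types, lifting) adj_mono mono_rtranclp)

lemma wf_induced: "wf_mgraph G \<Longrightarrow> wf_mgraph (induced G X)"
  unfolding wf_mgraph_def induced_def by auto

lemma wf_del: "wf_mgraph G \<Longrightarrow> wf_mgraph (del_verts G X)"
  unfolding del_verts_def using wf_induced by blast

lemma wf_rem: "wf_mgraph G \<Longrightarrow> wf_mgraph (rem_edge G e)"
  unfolding wf_mgraph_def rem_edge_def by auto

lemma induced_simps[simp]: "verts (induced G X) = verts G \<inter> X"
  "edges (induced G X) = {e \<in> edges G. endpts G e \<subseteq> X}"
  "endpts (induced G X) = endpts G"
  unfolding induced_def by auto

lemma del_simps[simp]: "verts (del_verts G X) = verts G - X"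
  "edges (del_verts G X) = {e \<in> edges G. endpts G e \<subseteq> verts G - X}"
  "endpts (del_verts G X) = endpts G"
  unfolding del_verts_def by auto

lemma rem_simps[simp]: "verts (rem_edge G e) = verts G"
  "edges (rem_edge G e) = edges G - {e}"
  "endpts (rem_edge G e) = endpts G"
  unfolding rem_edge_def by auto

lemma endpts_two: "wf_mgraph G \<Longrightarrow> e \<in> edges G \<Longrightarrow> u \<in> endpts G e \<Longrightarrow> v \<in> endpts G e \<Longrightarrow> u \<noteq> v
   \<Longrightarrow> endpts G e = {u, v}"
proof -
  assume a: "wf_mgraph G" "e \<in> edges G" "u \<in> endpts G e" "v \<in> endpts G e" "u \<noteq> v"
  then have f: "finite (endpts G e)" "card (endpts G e) \<le> 2"
    unfolding wf_mgraph_def by (auto intro: finite_subset)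
  have "{u, v} \<subseteq> endpts G e" "card {u, v} = 2" using a by auto
  then show ?thesis using f card_seteq by metis
qed

lemma cycle_endpts: "is_cycle A vs es \<Longrightarrow> e \<in> set es \<Longrightarrow> endpts A e \<subseteq> set vs"
proof -
  assume c: "is_cycle A vs es" "e \<in> set es"
  then obtain i where i: "i < length es" "es ! i = e" by (auto simp: in_set_conv_nth)
  have n: "length es = length vs" "vs \<noteq> []" using c unfolding is_cycle_def by auto
  then have "Suc i mod length vs < length vs" by simp
  then show ?thesis using c i n unfolding is_cycle_def by auto
qed

lemma cycle_transfer: "is_cycle A vs es \<Longrightarrow> set vs \<subseteq> verts B \<Longrightarrow>
   \<forall>e\<in>set es. e \<in> edges B \<and> endpts B e = endpts A e \<Longrightarrow> is_cycle B vs es"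
proof -
  assume a: "is_cycle A vs es" "set vs \<subseteq> verts B" "\<forall>e\<in>set es. e \<in> edges B \<and> endpts B e = endpts A e"
  then have l: "length es = length vs" unfolding is_cycle_def by auto
  have "\<forall>i<length vs. endpts B (es ! i) = {vs ! i, vs ! (Suc i mod length vs)}"
  proof (intro allI impI)
    fix i assume "i < length vs"
    then have "es ! i \<in> set es" using l by simp
    then show "endpts B (es ! i) = {vs ! i, vs ! (Suc i mod length vs)}"
      using a \<open>i < length vs\<close> unfolding is_cycle_def by auto
  qed
  then show ?thesis using a unfolding is_cycle_def by auto
qed

lemma forest_sub: "forest B \<Longrightarrow> verts A \<subseteq> verts B \<Longrightarrow> edges A \<subseteq> edges B \<Longrightarrow>
   \<forall>e\<in>edges A. endpts A e = endpts B e \<Longrightarrow> forest A"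
  unfolding forest_def
proof (intro notI, elim exE)
  fix vs es assume "\<not> (\<exists>vs es. is_cycle B vs es)" "verts A \<subseteq> verts B" "edges A \<subseteq> edges B"
    "\<forall>e\<in>edges A. endpts A e = endpts B e" "is_cycle A vs es"
  moreover have "set es \<subseteq> edges A" "set vs \<subseteq> verts A" using \<open>is_cycle A vs es\<close> unfolding is_cycle_def by auto
  ultimately have "is_cycle B vs es" using cycle_transfer[of A vs es B] by (metis subset_iff)
  then show False using \<open>\<not> (\<exists>vs es. is_cycle B vs es)\<close> by blast
qed

lemma fvs_set_finite: "finite (verts G) \<Longrightarrow> finite {card X | X. is_fvs G X}"
proof -
  assume f: "finite (verts G)"
  have "{card X | X. is_fvs G X} \<subseteq> {..card (verts G)}"
    unfolding is_fvs_def using f by (auto intro: card_mono)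
  then show ?thesis using finite_subset by blast
qed

lemma fvs_verts: "is_fvs G (verts G)"
  unfolding is_fvs_def forest_def is_cycle_def by auto

lemma fvs_le: "finite (verts G) \<Longrightarrow> is_fvs G X \<Longrightarrow> fvs G \<le> card X"
  unfolding fvs_def using fvs_set_finite by (metis (mono_tags, lifting) Min_le mem_Collect_eq)

lemma fvs_ex: "finite (verts G) \<Longrightarrow> \<exists>X. is_fvs G X \<and> card X = fvs G"
proof -
  assume f: "finite (verts G)"
  have "{card X | X. is_fvs G X} \<noteq> {}" using fvs_verts by blast
  then have "fvs G \<in> {card X | X. is_fvs G X}" unfolding fvs_def using Min_in fvs_set_finite f by blast
  then show ?thesis by auto
qed

definition sgr :: "('v, 'e) mgraph \<Rightarrow> ('v, 'e) mgraph \<Rightarrow> bool" where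
  "sgr A B \<longleftrightarrow> verts A \<subseteq> verts B \<and> edges A \<subseteq> edges B \<and> (\<forall>e\<in>edges A. endpts A e = endpts B e)"

lemma fvs_mono:
  assumes "subgraph A B" "wf_mgraph B"
  shows "fvs A \<le> fvs B"
proof -
  have fB: "finite (verts B)" using assms unfolding wf_mgraph_def by auto
  then have fA: "finite (verts A)" using assms unfolding subgraph_def by (auto intro: finite_subset)
  obtain X where X: "is_fvs B X" "card X = fvs B" using fvs_ex fB by blast
  have "is_fvs A (X \<inter> verts A)"
    unfolding is_fvs_def
  proof
    show "forest (del_verts A (X \<inter> verts A))"
      apply (rule forest_sub[of "del_verts B X"])
      using X assms unfolding is_fvs_def subgraph_def by auto
  qed auto
  then have "fvs A \<le> card (X \<inter> verts A)" using fvs_le fA by blast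
  also have "\<dots> \<le> card X" using X fB unfolding is_fvs_def by (meson card_mono finite_subset inf_le1)
  finally show ?thesis using X by simp
qed

definition is_path :: "('v, 'e) mgraph \<Rightarrow> 'v list \<Rightarrow> 'e list \<Rightarrow> bool" where
  "is_path G vs es \<longleftrightarrow> vs \<noteq> [] \<and> length es = length vs - 1 \<and> distinct vs \<and> set vs \<subseteq> verts G \<and>
     set es \<subseteq> edges G \<and> (\<forall>i<length es. endpts G (es ! i) = {vs ! i, vs ! Suc i})"

lemma path_exists:
  assumes wf: "wf_mgraph G" and r: "(adj G)\<^sup>*\<^sup>* v w" and v: "v \<in> verts G"
  shows "\<exists>vs es. is_path G vs es \<and> hd vs = v \<and> last vs = w"
  using r
proof (induction rule: rtranclp_induct)
  case base
  show ?case by (rule exI[of _ "[v]"], rule exI[of _ "[]"]) (simp add: is_path_def v)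
next
  case (step w x)
  obtain vs es where p: "is_path G vs es" "hd vs = v" "last vs = w" using step.IH by blast
  obtain e where e: "e \<in> edges G" "w \<in> endpts G e" "x \<in> endpts G e" using step.hyps(2) unfolding adj_def by blast
  have ne: "vs \<noteq> []" and le: "length es = length vs - 1" using p unfolding is_path_def by auto
  show ?case
  proof (cases "x \<in> set vs")
    case True
    then obtain j where j: "j < length vs" "vs ! j = x" by (auto simp: in_set_conv_nth)
    have "is_path G (take (Suc j) vs) (take j es)"
      using p j le unfolding is_path_def
      by (auto simp: min_def dest: in_set_takeD)
    moreover have "hd (take (Suc j) vs) = v" using p ne by (simp add: hd_conv_nth)
    moreover have "last (take (Suc j) vs) = x" using j by (simp add: take_Suc_conv_app_nth)
    ultimately show ?thesis by blast
  next
    case False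
    have wv: "w \<in> set vs" using p ne by auto
    then have "w \<noteq> x" using False by auto
    then have ep: "endpts G e = {w, x}" using endpts_two[OF wf e] by blast
    have xv: "x \<in> verts G" using wf e unfolding wf_mgraph_def by auto
    have lw: "vs ! length es = w" using p ne le by (simp add: last_conv_nth)
    have "is_path G (vs @ [x]) (es @ [e])"
      unfolding is_path_def
    proof (intro conjI)
      show "\<forall>i<length (es @ [e]). endpts G ((es @ [e]) ! i) = {(vs @ [x]) ! i, (vs @ [x]) ! Suc i}"
      proof (intro allI impI)
        fix i assume i: "i < length (es @ [e])"
        show "endpts G ((es @ [e]) ! i) = {(vs @ [x]) ! i, (vs @ [x]) ! Suc i}"
        proof (cases "i < length es")
          case True
          then show ?thesis using p le unfolding is_path_def by (auto simp: nth_append)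
        next
          case False
          then have "i = length es" using i by simp
          then show ?thesis using ep lw le ne by (auto simp: nth_append)
        qed
      qed
    qed (use p le ne False xv e in \<open>auto simp: is_path_def\<close>)
    moreover have "hd (vs @ [x]) = v" using p ne by simp
    ultimately show ?thesis by (metis last_snoc)
  qed
qed

lemma path_distinct_edges:
  assumes "is_path G vs es" shows "distinct es"
proof -
  have d: "distinct vs" and l: "length es = length vs - 1"
    and ep: "\<forall>i<length es. endpts G (es ! i) = {vs ! i, vs ! Suc i}" using assms unfolding is_path_def by auto
  show ?thesis
  proof (rule distinct_conv_nth[THEN iffD2], intro allI impI)
    fix i j assume ij: "i < length es" "j < length es" "i \<noteq> j"
    show "es ! i \<noteq> es ! j"
    proof
      assume "es ! i = es ! j"
      then have "{vs ! i, vs ! Suc i} = {vs ! j, vs ! Suc j}" using ep ij by metis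
      moreover have "Suc i < length vs" "Suc j < length vs" using ij l by auto
      ultimately show False using d ij by (auto simp: doubleton_eq_iff nth_eq_iff_index_eq)
    qed
  qed
qed

lemma cycle_from_reach:
  assumes wf: "wf_mgraph G" and e: "e \<in> edges G" "endpts G e = {u, v}" "u \<noteq> v"
    and v: "v \<in> verts G" and r: "(adj (rem_edge G e))\<^sup>*\<^sup>* v u"
  shows "\<not> forest G"
proof -
  obtain vs es where p: "is_path (rem_edge G e) vs es" "hd vs = v" "last vs = u"
    using path_exists[OF wf_rem[OF wf] r] v by auto
  have ne: "vs \<noteq> []" and le: "length es = length vs - 1" and d: "distinct vs"
    and sv: "set vs \<subseteq> verts G" and se: "set es \<subseteq> edges G - {e}"
    and ep: "\<forall>i<length es. endpts G (es ! i) = {vs ! i, vs ! Suc i}"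
    using p unfolding is_path_def by auto
  have de: "distinct es" using path_distinct_edges[OF p(1)] .
  have "length vs \<noteq> 1" using p e ne by (metis One_nat_def hd_conv_nth last_conv_nth diff_Suc_1)
  then have lv: "length vs \<ge> 2" using ne by (cases vs) (auto simp: Suc_le_eq)
  have h0: "vs ! 0 = v" and hl: "vs ! length es = u" using p ne le by (auto simp: hd_conv_nth last_conv_nth)
  have "is_cycle G vs (es @ [e])"
    unfolding is_cycle_def
  proof (intro conjI)
    show "\<forall>i<length vs. endpts G ((es @ [e]) ! i) = {vs ! i, vs ! ((i + 1) mod length vs)}"
    proof (intro allI impI)
      fix i assume i: "i < length vs"
      show "endpts G ((es @ [e]) ! i) = {vs ! i, vs ! ((i + 1) mod length vs)}"
      proof (cases "i < length es")
        case True
        then have "Suc i mod length vs = Suc i" using le by auto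
        then show ?thesis using True ep by (auto simp: nth_append)
      next
        case False
        then have "i = length es" using i le by simp
        moreover have "Suc (length es) = length vs" using le lv by simp
        then have "Suc (length es) mod length vs = 0" by simp
        ultimately show ?thesis using e hl h0 by (auto simp: nth_append)
      qed
    qed
  qed (use ne le d sv se de e in auto)
  then show ?thesis unfolding forest_def by blast
qed

lemma mod_cycle_all:
  assumes n: "0 < n" and p0: "P i0" and i0: "i0 < n" and st: "\<forall>i<n. P i \<longrightarrow> P (Suc i mod n)" and j: "j < n"
  shows "P j"
proof -
  have "\<forall>m. P ((i0 + m) mod n)"
  proof
    fix m show "P ((i0 + m) mod n)"
    proof (induction m)
      case 0 then show ?case using p0 i0 by simp
    next
      case (Suc m)
      have "(i0 + Suc m) mod n = Suc ((i0 + m) mod n) mod n" by (simp add: mod_Suc_eq)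
      then show ?case using st Suc n by simp
    qed
  qed
  then have "P ((i0 + (j + n - i0)) mod n)" by blast
  moreover have "(i0 + (j + n - i0)) mod n = j" using i0 j by simp
  ultimately show ?thesis by simp
qed

lemma cycle_cross:
  assumes c: "is_cycle G vs es" and a: "a < length vs" "vs ! a \<in> S" and b: "b < length vs" "vs ! b \<notin> S"
  shows "\<exists>i<length vs. vs ! i \<in> S \<and> vs ! (Suc i mod length vs) \<notin> S"
proof (rule ccontr)
  assume "\<not> ?thesis"
  then have st: "\<forall>i<length vs. vs ! i \<in> S \<longrightarrow> vs ! (Suc i mod length vs) \<in> S" by blast
  have n: "0 < length vs" using a(1) by arith
  have "vs ! b \<in> S" using mod_cycle_all[of "length vs" "\<lambda>i. vs ! i \<in> S" a b] n a b st by blast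
  then show False using b by simp
qed




lemma sum_comp:
  assumes f: "finite (verts G)" and X: "X \<subseteq> verts G"
  shows "card X = (\<Sum>T\<in>components G. card (X \<inter> T))"
proof -
  have "X = (\<Union>T\<in>components G. X \<inter> T)"
    using X comp_self comp_mem by fastforce
  moreover have "card (\<Union>T\<in>components G. X \<inter> T) = (\<Sum>T\<in>components G. card (X \<inter> T))"
  proof (rule card_UN_disjoint)
    show "finite (components G)" using f finite_components by blast
    have "finite X" using f X finite_subset by blast
    then show "\<forall>T\<in>components G. finite (X \<inter> T)" by blast
    show "\<forall>i\<in>components G. \<forall>j\<in>components G. i \<noteq> j \<longrightarrow> X \<inter> i \<inter> (X \<inter> j) = {}"
    proof (intro ballI impI)
      fix i j assume "i \<in> components G" "j \<in> components G" "i \<noteq> j"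
      then show "X \<inter> i \<inter> (X \<inter> j) = {}" using comps_disj[of i G j] by blast
    qed
  qed
  ultimately show ?thesis by simp
qed

lemma hit_card_gen:
  assumes fY: "finite Y" and disj: "\<forall>K1\<in>KK. \<forall>K2\<in>KK. K1 \<inter> K2 \<noteq> {} \<longrightarrow> K1 = K2" and sub: "\<forall>K\<in>KK. K \<subseteq> T"
  shows "card {K \<in> KK. K \<inter> Y \<noteq> {}} \<le> card (Y \<inter> T)"
proof -
  define f where "f = (\<lambda>K. SOME y. y \<in> K \<inter> Y)"
  have fK: "f K \<in> K \<inter> Y" if "K \<inter> Y \<noteq> {}" for K
  proof -
    have "\<exists>y. y \<in> K \<inter> Y" using that by blast
    then show ?thesis unfolding f_def by (rule someI_ex)
  qed
  have "inj_on f {K \<in> KK. K \<inter> Y \<noteq> {}}"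
  proof (rule inj_onI)
    fix K1 K2 assume a: "K1 \<in> {K \<in> KK. K \<inter> Y \<noteq> {}}" "K2 \<in> {K \<in> KK. K \<inter> Y \<noteq> {}}" "f K1 = f K2"
    have "f K1 \<in> K1" using fK a(1) by blast
    moreover have "f K2 \<in> K2" using fK a(2) by blast
    ultimately have "f K1 \<in> K1 \<and> f K1 \<in> K2" using a(3) by simp
    then have "K1 \<inter> K2 \<noteq> {}" by blast
    then show "K1 = K2" using disj a(1,2) by blast
  qed
  moreover have "f ` {K \<in> KK. K \<inter> Y \<noteq> {}} \<subseteq> Y \<inter> T"
  proof
    fix y assume "y \<in> f ` {K \<in> KK. K \<inter> Y \<noteq> {}}"
    then obtain K where K: "K \<in> KK" "K \<inter> Y \<noteq> {}" "y = f K" by blast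
    then have "y \<in> K \<inter> Y" using fK by blast
    then show "y \<in> Y \<inter> T" using sub K(1) by blast
  qed
  moreover have "finite (Y \<inter> T)" using fY by simp
  ultimately show ?thesis by (rule card_inj_on_le)
qed

lemma cycle_in_comp:
  assumes wf: "wf_mgraph B" and c: "is_cycle A vs es" and sv: "set vs \<subseteq> verts B"
    and se: "\<forall>e\<in>set es. e \<in> edges B \<and> endpts B e = endpts A e"
  shows "set vs \<subseteq> comp_of B (vs ! 0)"
proof -
  have ne: "vs \<noteq> []" and le: "length es = length vs"
    and ep: "\<forall>i<length vs. endpts A (es ! i) = {vs ! i, vs ! ((i + 1) mod length vs)}"
    using c unfolding is_cycle_def by auto
  have "\<forall>i. i < length vs \<longrightarrow> vs ! i \<in> comp_of B (vs ! 0)"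
  proof
    fix i show "i < length vs \<longrightarrow> vs ! i \<in> comp_of B (vs ! 0)"
    proof (induction i)
      case 0
      have "vs ! 0 \<in> verts B" using sv ne by (simp add: subset_iff)
      then show ?case using comp_self[of "vs ! 0" B] by blast
    next
      case (Suc i)
      show ?case
      proof
        assume si: "Suc i < length vs"
        then have ih: "vs ! i \<in> comp_of B (vs ! 0)" using Suc by simp
        have ei: "es ! i \<in> set es" using si le by simp
        have "(i + 1) mod length vs = Suc i" using si by simp
        then have "endpts B (es ! i) = {vs ! i, vs ! Suc i}" using ep se ei si by auto
        then have "adj B (vs ! i) (vs ! Suc i)" unfolding adj_def using se ei by auto
        then show "vs ! Suc i \<in> comp_of B (vs ! 0)" using comp_closed[OF wf ih] by blast
      qed
    qed
  qed
  then show ?thesis by (auto simp: in_set_conv_nth)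
qed

locale ctx =
  fixes H :: "('v, 'e) mgraph" and C :: "'v set" and z :: nat
  assumes wfH: "wf_mgraph H" and fvsC: "is_fvs H C"
    and compH: "\<forall>T\<in>components H. fvs (induced H T) = card (C \<inter> T) \<and> card (C \<inter> T) \<le> z"
begin

abbreviation "HC \<equiv> del_verts H C"
definition "Trees = components HC"
definition "Dc c = {K \<in> Trees. \<exists>e1\<in>edges H. \<exists>e2\<in>edges H. e1 \<noteq> e2 \<and> c \<in> endpts H e1 \<and>
   c \<in> endpts H e2 \<and> endpts H e1 \<inter> K \<noteq> {} \<and> endpts H e2 \<inter> K \<noteq> {}}"
definition "Ap p = {K \<in> Trees. \<forall>x\<in>p. \<exists>e\<in>edges H. x \<in> endpts H e \<and> endpts H e \<inter> K \<noteq> {}}"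
definition "KD c = (SOME S. S \<subseteq> Dc c \<and> card S = min (card (Dc c)) z)"
definition "KA p = (SOME S. S \<subseteq> Ap p \<and> card S = min (card (Ap p)) (Suc z))"
definition "P2 = {p. p \<subseteq> C \<and> card p = 2}"
definition "Kept = (\<Union>c\<in>C. KD c) \<union> (\<Union>p\<in>P2. KA p)"
definition "W = C \<union> \<Union>Kept"
definition "H2 = induced H W"

lemma finV: "finite (verts H)" and finE: "finite (edges H)"
  using wfH unfolding wf_mgraph_def by auto

lemma CV: "C \<subseteq> verts H" and forestHC: "forest HC"
  using fvsC unfolding is_fvs_def by auto

lemma finC: "finite C" using CV finV finite_subset by blast

lemma wfHC: "wf_mgraph HC" using wf_del wfH by blast

lemma endH: "e \<in> edges H \<Longrightarrow> endpts H e \<subseteq> verts H"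
  using wfH unfolding wf_mgraph_def by auto

lemma Trees_sub: "K \<in> Trees \<Longrightarrow> K \<subseteq> verts H - C"
  unfolding Trees_def using comps_sub by fastforce

lemma finTrees: "finite Trees"
  unfolding Trees_def using finite_components[of HC] finV by auto

lemma Trees_disj: "K1 \<in> Trees \<Longrightarrow> K2 \<in> Trees \<Longrightarrow> x \<in> K1 \<Longrightarrow> x \<in> K2 \<Longrightarrow> K1 = K2"
  unfolding Trees_def using comps_disj by metis

lemma finDc: "finite (Dc c)" unfolding Dc_def using finTrees by auto
lemma finAp: "finite (Ap p)" unfolding Ap_def using finTrees by auto

lemma KD_prop: "KD c \<subseteq> Dc c \<and> card (KD c) = min (card (Dc c)) z"
proof -
  obtain S where "S \<subseteq> Dc c" "card S = min (card (Dc c)) z"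
    using obtain_subset_with_card_n[of "min (card (Dc c)) z" "Dc c"] by auto
  then have "\<exists>S. S \<subseteq> Dc c \<and> card S = min (card (Dc c)) z" by blast
  then show ?thesis unfolding KD_def by (rule someI_ex)
qed

lemma KA_prop: "KA p \<subseteq> Ap p \<and> card (KA p) = min (card (Ap p)) (Suc z)"
proof -
  obtain S where "S \<subseteq> Ap p" "card S = min (card (Ap p)) (Suc z)"
    using obtain_subset_with_card_n[of "min (card (Ap p)) (Suc z)" "Ap p"] by auto
  then have "\<exists>S. S \<subseteq> Ap p \<and> card S = min (card (Ap p)) (Suc z)" by blast
  then show ?thesis unfolding KA_def by (rule someI_ex)
qed

lemma KD_full: "K \<in> Dc c \<Longrightarrow> K \<notin> KD c \<Longrightarrow> card (KD c) = z"
proof -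
  assume a: "K \<in> Dc c" "K \<notin> KD c"
  have "\<not> card (Dc c) \<le> z"
  proof
    assume "card (Dc c) \<le> z"
    then have "card (KD c) = card (Dc c)" using KD_prop by simp
    then have "KD c = Dc c" using KD_prop finDc card_subset_eq by blast
    then show False using a by simp
  qed
  then show ?thesis using KD_prop by simp
qed

lemma KA_full: "K \<in> Ap p \<Longrightarrow> K \<notin> KA p \<Longrightarrow> card (KA p) = Suc z"
proof -
  assume a: "K \<in> Ap p" "K \<notin> KA p"
  have "\<not> card (Ap p) \<le> Suc z"
  proof
    assume "card (Ap p) \<le> Suc z"
    then have "card (KA p) = card (Ap p)" using KA_prop by simp
    then have "KA p = Ap p" using KA_prop finAp card_subset_eq by blast
    then show False using a by simp
  qed
  then show ?thesis using KA_prop by simp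
qed

lemma Kept_Trees: "Kept \<subseteq> Trees"
  unfolding Kept_def using KD_prop KA_prop unfolding Dc_def Ap_def by blast

lemma Kept_W: "K \<in> Kept \<Longrightarrow> K \<subseteq> W" unfolding W_def by auto

lemma HC_edge: "e \<in> edges H \<Longrightarrow> endpts H e \<subseteq> verts H - C \<Longrightarrow> e \<in> edges HC" by simp

lemma tree_reach:
  assumes K: "K \<in> Trees" and a: "a \<in> K" and b: "b \<in> K"
  shows "(adj HC)\<^sup>*\<^sup>* a b"
proof -
  obtain u where "K = comp_of HC u" using K unfolding Trees_def components_eq by auto
  then have "(adj HC)\<^sup>*\<^sup>* u a" "(adj HC)\<^sup>*\<^sup>* u b" using a b unfolding comp_of_def by auto
  then show ?thesis using rtranclp_adj_sym rtranclp_trans by metis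
qed

lemma tree_closed:
  assumes K: "K \<in> Trees" and a: "a \<in> K" and e: "e \<in> edges HC" "a \<in> endpts H e"
  shows "endpts H e \<subseteq> K"
proof
  fix x assume x: "x \<in> endpts H e"
  have "adj HC a x" unfolding adj_def using e x by auto
  moreover have "K = comp_of HC a" using K a comp_in unfolding Trees_def by metis
  ultimately show "x \<in> K" using comp_closed[OF wfHC] a by metis
qed

lemma HC_adj_H: "adj HC x y \<Longrightarrow> adj H x y"
  by (rule adj_mono[of HC H]) auto

lemma tree_in_comp:
  assumes K: "K \<in> Trees" and e: "e \<in> edges H" "c \<in> endpts H e" "endpts H e \<inter> K \<noteq> {}"
  shows "K \<subseteq> comp_of H c"
proof
  fix v assume v: "v \<in> K"
  obtain a where a: "a \<in> endpts H e" "a \<in> K" using e by auto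
  have "(adj HC)\<^sup>*\<^sup>* a v" using tree_reach K a v by blast
  then have "(adj H)\<^sup>*\<^sup>* a v" using reach_mono[of HC H] by auto
  moreover have "adj H c a" unfolding adj_def using e a by auto
  ultimately have "(adj H)\<^sup>*\<^sup>* c v" by (meson converse_rtranclp_into_rtranclp)
  moreover have "v \<in> verts H" using v Trees_sub K by auto
  ultimately show "v \<in> comp_of H c" unfolding comp_of_def by auto
qed

lemma H2_del_simps[simp]:
  "verts (del_verts H2 Y) = verts H \<inter> W - Y"
  "edges (del_verts H2 Y) = {e \<in> edges H. endpts H e \<subseteq> W - Y}"
  "endpts (del_verts H2 Y) = endpts H"
  unfolding H2_def using endH by auto

declare del_simps[simp del]

lemma wfG0: "wf_mgraph (del_verts H2 Y)"
  unfolding H2_def using wfH wf_del wf_induced by blast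

lemma tree_transfer:
  assumes K: "K \<in> Trees" "K \<subseteq> W" "K \<inter> Y = {}" and a: "a \<in> K" and b: "b \<in> K"
    and e1: "endpts H e1 \<inter> C \<noteq> {}"
  shows "(adj (rem_edge (del_verts H2 Y) e1))\<^sup>*\<^sup>* a b"
proof -
  have "(adj HC)\<^sup>*\<^sup>* a b" using tree_reach K a b by blast
  then have "b \<in> K \<and> (adj (rem_edge (del_verts H2 Y) e1))\<^sup>*\<^sup>* a b"
  proof (induction rule: rtranclp_induct)
    case base then show ?case using a by simp
  next
    case (step y x)
    obtain e where e: "e \<in> edges HC" "y \<in> endpts H e" "x \<in> endpts H e" using step.hyps(2) unfolding adj_def by (auto simp: del_simps)
    have sub: "endpts H e \<subseteq> K" using tree_closed[OF K(1) _ e(1,2)] step.IH by blast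
    have eH: "e \<in> edges H" using e(1) by (simp add: del_simps)
    have "e \<noteq> e1" using e(1) e1 by (auto simp: del_simps)
    then have "e \<in> edges (rem_edge (del_verts H2 Y) e1)" using sub K eH by (auto simp del: del_simps simp add: H2_del_simps)
    then have "adj (rem_edge (del_verts H2 Y) e1) y x" unfolding adj_def using e by (auto simp del: del_simps simp add: H2_del_simps)
    then show ?case using step.IH sub e(3) by (meson rtranclp.rtrancl_into_rtrancl subsetD)
  qed
  then show ?thesis by blast
qed

lemma RD:
  assumes K: "K \<in> Dc c" "K \<subseteq> W" "K \<inter> Y = {}" and c: "c \<in> C" "c \<notin> Y"
  shows "\<not> forest (del_verts H2 Y)"
proof -
  obtain e1 e2 where e: "e1 \<in> edges H" "e2 \<in> edges H" "e1 \<noteq> e2" "c \<in> endpts H e1" "c \<in> endpts H e2"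
    "endpts H e1 \<inter> K \<noteq> {}" "endpts H e2 \<inter> K \<noteq> {}" using K(1) unfolding Dc_def by blast
  obtain a b where ab: "a \<in> endpts H e1" "a \<in> K" "b \<in> endpts H e2" "b \<in> K" using e by blast
  have KT: "K \<in> Trees" using K unfolding Dc_def by auto
  have "a \<notin> C" "b \<notin> C" using ab Trees_sub KT by auto
  then have ca: "c \<noteq> a" "c \<noteq> b" using c by auto
  have ep1: "endpts H e1 = {c, a}" using endpts_two[OF wfH e(1) e(4) ab(1) ca(1)] .
  have ep2: "endpts H e2 = {c, b}" using endpts_two[OF wfH e(2) e(5) ab(3) ca(2)] .
  have cW: "c \<in> W" using c unfolding W_def by auto
  have in1: "e1 \<in> edges (del_verts H2 Y)" using ep1 cW c ab K e by (auto simp del: del_simps simp add: H2_del_simps)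
  have in2: "e2 \<in> edges (rem_edge (del_verts H2 Y) e1)" using ep2 cW c ab K e by (auto simp del: del_simps simp add: H2_del_simps)
  have r1: "(adj (rem_edge (del_verts H2 Y) e1))\<^sup>*\<^sup>* a b"
    using tree_transfer[OF KT K(2,3) ab(2) ab(4)] e c by auto
  have "adj (rem_edge (del_verts H2 Y) e1) b c" unfolding adj_def using in2 ep2 by auto
  then have r: "(adj (rem_edge (del_verts H2 Y) e1))\<^sup>*\<^sup>* a c" using r1 by auto
  have av: "a \<in> verts (del_verts H2 Y)" using ab K endH e by (auto simp del: del_simps simp add: H2_del_simps)
  show ?thesis
    by (rule cycle_from_reach[OF wfG0 in1 _ ca(1) av r]) (simp del: del_simps add: ep1 H2_del_simps)
qed

lemma RA:
  assumes K1: "K1 \<in> Ap {c, c'}" "K1 \<subseteq> W" "K1 \<inter> Y = {}" and K2: "K2 \<in> Ap {c, c'}" "K2 \<subseteq> W" "K2 \<inter> Y = {}"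
    and K12: "K1 \<noteq> K2" and c: "c \<in> C" "c \<notin> Y" "c' \<in> C" "c' \<notin> Y" "c \<noteq> c'"
  shows "\<not> forest (del_verts H2 Y)"
proof -
  have KT: "K1 \<in> Trees" "K2 \<in> Trees" using K1 K2 unfolding Ap_def by auto
  obtain e1 a1 where e1: "e1 \<in> edges H" "c \<in> endpts H e1" "a1 \<in> endpts H e1" "a1 \<in> K1"
    using K1(1) unfolding Ap_def by blast
  obtain f1 b1 where f1: "f1 \<in> edges H" "c' \<in> endpts H f1" "b1 \<in> endpts H f1" "b1 \<in> K1"
    using K1(1) unfolding Ap_def by blast
  obtain e2 a2 where e2: "e2 \<in> edges H" "c \<in> endpts H e2" "a2 \<in> endpts H e2" "a2 \<in> K2"
    using K2(1) unfolding Ap_def by blast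
  obtain f2 b2 where f2: "f2 \<in> edges H" "c' \<in> endpts H f2" "b2 \<in> endpts H f2" "b2 \<in> K2"
    using K2(1) unfolding Ap_def by blast
  have nC: "a1 \<notin> C" "b1 \<notin> C" "a2 \<notin> C" "b2 \<notin> C" using e1 f1 e2 f2 Trees_sub KT by auto
  have ep_e1: "endpts H e1 = {c, a1}" using endpts_two[OF wfH e1(1,2,3)] nC c by auto
  have ep_f1: "endpts H f1 = {c', b1}" using endpts_two[OF wfH f1(1,2,3)] nC c by auto
  have ep_e2: "endpts H e2 = {c, a2}" using endpts_two[OF wfH e2(1,2,3)] nC c by auto
  have ep_f2: "endpts H f2 = {c', b2}" using endpts_two[OF wfH f2(1,2,3)] nC c by auto
  have a12: "a1 \<noteq> a2" using Trees_disj[OF KT] e1(4) e2(4) K12 by blast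
  have cW: "c \<in> W" "c' \<in> W" using c unfolding W_def by auto
  let ?R = "rem_edge (del_verts H2 Y) e1"
  have in1: "e1 \<in> edges (del_verts H2 Y)" using ep_e1 cW c e1 K1 by (auto simp del: del_simps simp add: H2_del_simps)
  have "f1 \<noteq> e1" using ep_e1 ep_f1 c nC by (auto simp: doubleton_eq_iff)
  then have inf1: "f1 \<in> edges ?R" using ep_f1 cW c f1 K1 by (auto simp del: del_simps simp add: H2_del_simps)
  have "f2 \<noteq> e1" using ep_e1 ep_f2 c nC by (auto simp: doubleton_eq_iff)
  then have inf2: "f2 \<in> edges ?R" using ep_f2 cW c f2 K2 by (auto simp del: del_simps simp add: H2_del_simps)
  have "e2 \<noteq> e1" using ep_e1 ep_e2 c nC a12 by (auto simp: doubleton_eq_iff)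
  then have ine2: "e2 \<in> edges ?R" using ep_e2 cW c e2 K2 by (auto simp del: del_simps simp add: H2_del_simps)
  have r1: "(adj ?R)\<^sup>*\<^sup>* a1 b1" using tree_transfer[OF KT(1) K1(2,3) e1(4) f1(4)] e1 c by auto
  have r2: "(adj ?R)\<^sup>*\<^sup>* b2 a2" using tree_transfer[OF KT(2) K2(2,3) f2(4) e2(4)] e1 c by auto
  have s1: "adj ?R b1 c'" unfolding adj_def using inf1 ep_f1 by auto
  have s2: "adj ?R c' b2" unfolding adj_def using inf2 ep_f2 by auto
  have s3: "adj ?R a2 c" unfolding adj_def using ine2 ep_e2 by auto
  have r: "(adj ?R)\<^sup>*\<^sup>* a1 c"
    using r1 s1 s2 r2 s3 by (meson rtranclp.rtrancl_into_rtrancl rtranclp_trans)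
  have av: "a1 \<in> verts (del_verts H2 Y)" using e1 K1 endH by (auto simp del: del_simps simp add: H2_del_simps)
  have ca: "c \<noteq> a1" using nC c by auto
  show ?thesis
    by (rule cycle_from_reach[OF wfG0 in1 _ ca av r]) (simp del: del_simps add: ep_e1 H2_del_simps)
qed


lemma H2_simps[simp]: "verts H2 = verts H \<inter> W" "edges H2 = {e \<in> edges H. endpts H e \<subseteq> W}" "endpts H2 = endpts H"
  unfolding H2_def by auto

lemma finH2: "finite (verts H2)" using finV by simp

lemma CW: "C \<subseteq> W" unfolding W_def by auto

lemma fvsC2: "is_fvs H2 C"
  unfolding is_fvs_def
proof
  show "C \<subseteq> verts H2" using CV CW by auto
  show "forest (del_verts H2 C)"
    by (rule forest_sub[OF forestHC]) (auto simp: del_simps)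
qed

lemma cross_C:
  assumes K: "K \<in> Trees" "x \<in> K" and e: "e \<in> edges H" "x \<in> endpts H e" "y \<in> endpts H e" "y \<notin> K"
  shows "y \<in> C"
proof (rule ccontr)
  assume yC: "y \<notin> C"
  have "x \<noteq> y" using K e by auto
  then have ep: "endpts H e = {x, y}" using endpts_two[OF wfH e(1,2,3)] by simp
  have "x \<in> verts H - C" using K Trees_sub by auto
  moreover have "y \<in> verts H" using endH e by auto
  ultimately have "e \<in> edges HC" using ep yC e by (auto simp: del_simps)
  then have "endpts H e \<subseteq> K" using tree_closed[OF K(1) K(2)] e by blast
  then show False using e by auto
qed

lemma reroute:
  assumes T: "T \<in> components H" and lt: "card (Y \<inter> T) < card (C \<inter> T)" and fY: "finite Y"
    and cyc: "is_cycle (del_verts (induced H T) (Y \<inter> T)) vs es" and t: "t \<in> set vs" "t \<notin> W"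
  shows "\<not> forest (del_verts H2 Y)"
proof -
  let ?G1 = "del_verts (induced H T) (Y \<inter> T)"
  let ?n = "length vs"
  have sv: "set vs \<subseteq> verts H \<inter> T - Y" using cyc unfolding is_cycle_def by (auto simp: del_simps)
  have se: "set es \<subseteq> edges H" using cyc unfolding is_cycle_def by (auto simp: del_simps)
  have le: "length es = ?n" and de: "distinct es" using cyc unfolding is_cycle_def by auto
  have ep: "\<And>i. i < ?n \<Longrightarrow> endpts H (es ! i) = {vs ! i, vs ! (Suc i mod ?n)}"
    using cyc unfolding is_cycle_def by (auto simp: del_simps)
  have esH: "\<And>i. i < ?n \<Longrightarrow> es ! i \<in> edges H" using se le by (metis nth_mem subsetD)
  have n0: "0 < ?n" using t by (cases vs) auto
  have modn: "\<And>i. Suc i mod ?n < ?n" using n0 by simp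
  have tV: "t \<in> verts H" "t \<notin> C" using t sv CW by auto
  define K0 where "K0 = comp_of HC t"
  have K0T: "K0 \<in> Trees" unfolding K0_def Trees_def using tV comp_mem[of t HC] by (simp add: del_simps)
  have tK0: "t \<in> K0" unfolding K0_def using tV comp_self[of t HC] by (simp add: del_simps)
  have K0nk: "K0 \<notin> Kept" using Kept_W tK0 t by blast
  obtain a where a: "a < ?n" "vs ! a = t" using t by (auto simp: in_set_conv_nth)
  have "\<exists>b<?n. vs ! b \<notin> K0"
  proof (rule ccontr)
    assume "\<not> ?thesis"
    then have svK: "set vs \<subseteq> K0" by (auto simp: in_set_conv_nth)
    have "is_cycle HC vs es"
    proof (rule cycle_transfer[OF cyc])
      show "set vs \<subseteq> verts HC" using svK Trees_sub K0T by (auto simp: del_simps)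
      show "\<forall>e\<in>set es. e \<in> edges HC \<and> endpts HC e = endpts ?G1 e"
      proof
        fix e assume e: "e \<in> set es"
        have "endpts ?G1 e \<subseteq> set vs" using cycle_endpts[OF cyc e] .
        then have "endpts H e \<subseteq> verts H - C" using svK Trees_sub K0T by (auto simp: del_simps)
        then show "e \<in> edges HC \<and> endpts HC e = endpts ?G1 e" using e se by (auto simp: del_simps)
      qed
    qed
    then show False using forestHC unfolding forest_def by blast
  qed
  then obtain b where b: "b < ?n" "vs ! b \<notin> K0" by blast
  obtain i where i: "i < ?n" "vs ! i \<in> K0" "vs ! (Suc i mod ?n) \<notin> K0"
    using cycle_cross[OF cyc a(1) _ b] a tK0 by blast
  obtain j where j: "j < ?n" "vs ! j \<in> - K0" "vs ! (Suc j mod ?n) \<notin> - K0"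
    using cycle_cross[OF cyc b(1) _ a(1), of "- K0"] a tK0 b by auto
  define c where "c = vs ! (Suc i mod ?n)"
  define c' where "c' = vs ! j"
  have vsi: "vs ! k \<in> verts H \<and> vs ! k \<in> T \<and> vs ! k \<notin> Y" if "k < ?n" for k
  proof -
    have "vs ! k \<in> set vs" using that by simp
    then show ?thesis using sv by blast
  qed
  have cC: "c \<in> C" unfolding c_def
    by (rule cross_C[OF K0T i(2) esH[OF i(1)]]) (use ep[OF i(1)] i in auto)
  have c'C: "c' \<in> C" unfolding c'_def
    by (rule cross_C[OF K0T _ esH[OF j(1)], of "vs ! (Suc j mod ?n)"]) (use ep[OF j(1)] j in auto)
  have cT: "c \<in> T" "c \<notin> Y" "c' \<in> T" "c' \<notin> Y" using vsi[OF modn[of i]] vsi[OF j(1)] unfolding c_def c'_def by auto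
  have ij: "i \<noteq> j" using i j by auto
  have eij: "es ! i \<noteq> es ! j" using de ij i(1) j(1) le by (simp add: nth_eq_iff_index_eq)
  have Tc: "T = comp_of H c" using comp_in[OF T cT(1)] .
  have ei: "c \<in> endpts H (es ! i)" "endpts H (es ! i) \<inter> K0 \<noteq> {}" using ep[OF i(1)] i unfolding c_def by auto
  have ej: "c' \<in> endpts H (es ! j)" "endpts H (es ! j) \<inter> K0 \<noteq> {}" using ep[OF j(1)] j unfolding c'_def by auto
  show ?thesis
  proof (cases "c = c'")
    case True
    have "K0 \<in> Dc c" unfolding Dc_def using K0T esH[OF i(1)] esH[OF j(1)] eij ei ej True by blast
    moreover have "K0 \<notin> KD c" using K0nk cC unfolding Kept_def by blast
    ultimately have cz: "card (KD c) = z" using KD_full by blast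
    let ?Hit = "{K \<in> KD c. K \<inter> Y \<noteq> {}}"
    have subT: "\<forall>K\<in>KD c. K \<subseteq> T"
    proof
      fix K assume "K \<in> KD c"
      then have "K \<in> Dc c" using KD_prop by blast
      then show "K \<subseteq> T" unfolding Tc Dc_def using tree_in_comp by blast
    qed
    have dK: "\<forall>K1\<in>KD c. \<forall>K2\<in>KD c. K1 \<inter> K2 \<noteq> {} \<longrightarrow> K1 = K2"
      using Trees_disj KD_prop unfolding Dc_def by blast
    have "card ?Hit \<le> card (Y \<inter> T)"
      by (rule hit_card_gen[OF fY dK subT])
    moreover have "card (C \<inter> T) \<le> z" using compH T by blast
    ultimately have "card ?Hit < card (KD c)" using lt cz by linarith
    moreover have "finite (KD c)" using KD_prop finDc finite_subset by blast
    ultimately have "\<not> KD c \<subseteq> ?Hit"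
    proof (intro notI)
      assume "card ?Hit < card (KD c)" "finite (KD c)" "KD c \<subseteq> ?Hit"
      moreover have "finite ?Hit" using \<open>finite (KD c)\<close> by simp
      ultimately show False using card_mono[of ?Hit "KD c"] by linarith
    qed
    then obtain K where K: "K \<in> KD c" "K \<inter> Y = {}" by blast
    have "K \<in> Kept" using K cC unfolding Kept_def by blast
    have "K \<in> Dc c" using K KD_prop by blast
    then show ?thesis using RD[of K c Y] K cC cT Kept_W[OF \<open>K \<in> Kept\<close>] by blast
  next
    case False
    let ?p = "{c, c'}"
    have pP: "?p \<in> P2" unfolding P2_def using cC c'C False by auto
    have "K0 \<in> Ap ?p" unfolding Ap_def using K0T esH[OF i(1)] esH[OF j(1)] ei ej by blast
    moreover have "K0 \<notin> KA ?p" using K0nk pP unfolding Kept_def by blast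
    ultimately have cz: "card (KA ?p) = Suc z" using KA_full by blast
    let ?Hit = "{K \<in> KA ?p. K \<inter> Y \<noteq> {}}"
    have subT: "\<forall>K\<in>KA ?p. K \<subseteq> T"
    proof
      fix K assume "K \<in> KA ?p"
      then have "K \<in> Ap ?p" using KA_prop by blast
      then show "K \<subseteq> T" unfolding Tc Ap_def using tree_in_comp by blast
    qed
    have dK: "\<forall>K1\<in>KA ?p. \<forall>K2\<in>KA ?p. K1 \<inter> K2 \<noteq> {} \<longrightarrow> K1 = K2"
      using Trees_disj KA_prop unfolding Ap_def by blast
    have "card ?Hit \<le> card (Y \<inter> T)"
      by (rule hit_card_gen[OF fY dK subT])
    moreover have "card (C \<inter> T) \<le> z" using compH T by blast
    ultimately have hz: "card ?Hit < z" using lt by linarith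
    have fKA: "finite (KA ?p)" using KA_prop finAp finite_subset by blast
    have "card (KA ?p - ?Hit) = card (KA ?p) - card ?Hit"
      by (rule card_Diff_subset) (use fKA finite_subset in auto)
    then have "card (KA ?p - ?Hit) \<ge> 2" using cz hz by linarith
    then have "\<not> card (KA ?p - ?Hit) \<le> Suc 0" by linarith
    then obtain K1 K2 where K12: "K1 \<in> KA ?p - ?Hit" "K2 \<in> KA ?p - ?Hit" "K1 \<noteq> K2"
      using card_le_Suc0_iff_eq[of "KA ?p - ?Hit"] fKA by blast
    have "K1 \<in> Kept" "K2 \<in> Kept" using K12 pP unfolding Kept_def by blast+
    have "K1 \<in> Ap ?p" "K2 \<in> Ap ?p" using K12 KA_prop by blast+
    moreover have "K1 \<inter> Y = {}" "K2 \<inter> Y = {}" using K12 by blast+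
    ultimately show ?thesis using RA[of K1 c c' Y K2] K12(3) cC c'C cT False Kept_W[OF \<open>K1 \<in> Kept\<close>] Kept_W[OF \<open>K2 \<in> Kept\<close>] by blast
  qed
qed


lemma wfH2: "wf_mgraph H2" unfolding H2_def using wf_induced wfH by blast

lemma fvs_H2: "fvs H2 = card C"
proof (rule antisym)
  show "fvs H2 \<le> card C" using fvs_le[OF finH2 fvsC2] .
  show "card C \<le> fvs H2"
  proof (rule ccontr)
    assume nle: "\<not> card C \<le> fvs H2"
    obtain Y where Y: "is_fvs H2 Y" "card Y = fvs H2" using fvs_ex[OF finH2] by blast
    have lt: "card Y < card C" using Y nle by linarith
    have YV: "Y \<subseteq> verts H" using Y unfolding is_fvs_def by auto
    have fY: "finite Y" using YV finV finite_subset by blast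
    have "\<exists>T\<in>components H. card (Y \<inter> T) < card (C \<inter> T)"
    proof (rule ccontr)
      assume "\<not> ?thesis"
      then have "\<forall>T\<in>components H. card (C \<inter> T) \<le> card (Y \<inter> T)" by (simp add: not_less)
      then have "(\<Sum>T\<in>components H. card (C \<inter> T)) \<le> (\<Sum>T\<in>components H. card (Y \<inter> T))"
        by (intro sum_mono) blast
      then have "card C \<le> card Y" using sum_comp[OF finV CV] sum_comp[OF finV YV] by simp
      then show False using lt by simp
    qed
    then obtain T where T: "T \<in> components H" "card (Y \<inter> T) < card (C \<inter> T)" by blast
    have fT: "fvs (induced H T) = card (C \<inter> T)" using compH T(1) by blast
    have "\<not> is_fvs (induced H T) (Y \<inter> T)"
    proof
      assume "is_fvs (induced H T) (Y \<inter> T)"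
      moreover have "finite (verts (induced H T))" using finV by simp
      ultimately have "fvs (induced H T) \<le> card (Y \<inter> T)" using fvs_le by blast
      then show False using fT T by simp
    qed
    moreover have "Y \<inter> T \<subseteq> verts (induced H T)" using YV by auto
    ultimately have "\<not> forest (del_verts (induced H T) (Y \<inter> T))" unfolding is_fvs_def by blast
    then obtain vs es where cyc: "is_cycle (del_verts (induced H T) (Y \<inter> T)) vs es" unfolding forest_def by blast
    have nf: "forest (del_verts H2 Y)" using Y unfolding is_fvs_def by blast
    show False
    proof (cases "set vs \<subseteq> W")
      case False
      then obtain t where "t \<in> set vs" "t \<notin> W" by blast
      then show False using reroute[OF T(1) T(2) fY cyc] nf by blast
    next
      case True
      have svT: "set vs \<subseteq> verts H \<inter> T - Y" using cyc unfolding is_cycle_def by (auto simp: del_simps)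
      have "is_cycle (del_verts H2 Y) vs es"
      proof (rule cycle_transfer[OF cyc])
        show "set vs \<subseteq> verts (del_verts H2 Y)" using True svT by auto
        show "\<forall>e\<in>set es. e \<in> edges (del_verts H2 Y) \<and> endpts (del_verts H2 Y) e = endpts (del_verts (induced H T) (Y \<inter> T)) e"
        proof
          fix e assume e: "e \<in> set es"
          have "endpts (del_verts (induced H T) (Y \<inter> T)) e \<subseteq> set vs" using cycle_endpts[OF cyc e] .
          then have "endpts H e \<subseteq> W - Y" using svT True by (auto simp: del_simps)
          moreover have "e \<in> edges H" using cyc e unfolding is_cycle_def by (auto simp: del_simps)
          ultimately show "e \<in> edges (del_verts H2 Y) \<and> endpts (del_verts H2 Y) e = endpts (del_verts (induced H T) (Y \<inter> T)) e"
            using endH[of e] by (auto simp add: del_simps)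
        qed
      qed
      then show False using nf unfolding forest_def by blast
    qed
  qed
qed

lemma minfvs_H2: "min_fvs H2 C"
  unfolding min_fvs_def using fvsC2 fvs_H2 by simp

lemma comps_H2:
  assumes T2: "T2 \<in> components H2"
  shows "fvs (induced H2 T2) = card (C \<inter> T2) \<and> card (C \<inter> T2) \<le> z"
proof -
  obtain u where u: "u \<in> verts H2" "T2 = comp_of H2 u" using T2 unfolding components_eq by auto
  have sub: "T2 \<subseteq> comp_of H u"
  proof
    fix v assume "v \<in> T2"
    then have "v \<in> verts H2" "(adj H2)\<^sup>*\<^sup>* u v" using u unfolding comp_of_def by auto
    moreover have "(adj H)\<^sup>*\<^sup>* u v" using reach_mono[of H2 H] calculation(2) by auto
    ultimately show "v \<in> comp_of H u" unfolding comp_of_def by auto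
  qed
  have uH: "comp_of H u \<in> components H" using comp_mem[of u H] u by simp
  have "card (C \<inter> T2) \<le> card (C \<inter> comp_of H u)" using sub finC by (intro card_mono) auto
  also have "\<dots> \<le> z" using compH uH by blast
  finally have le: "card (C \<inter> T2) \<le> z" .
  have fin2: "finite (verts (induced H2 T2))" using finH2 by simp
  have CV2: "C \<subseteq> verts H2" using fvsC2 unfolding is_fvs_def by blast
  have "is_fvs (induced H2 T2) (C \<inter> T2)"
    unfolding is_fvs_def
  proof
    show "C \<inter> T2 \<subseteq> verts (induced H2 T2)" using CV2 by auto
    show "forest (del_verts (induced H2 T2) (C \<inter> T2))"
      by (rule forest_sub[OF forestHC]) (auto simp: del_simps)
  qed
  then have up: "fvs (induced H2 T2) \<le> card (C \<inter> T2)" using fvs_le fin2 by blast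
  have lo: "card (C \<inter> T2) \<le> fvs (induced H2 T2)"
  proof (rule ccontr)
    assume nle: "\<not> card (C \<inter> T2) \<le> fvs (induced H2 T2)"
    obtain X0 where X0: "is_fvs (induced H2 T2) X0" "card X0 = fvs (induced H2 T2)" using fvs_ex fin2 by blast
    define Y where "Y = (C - T2) \<union> X0"
    have X0sub: "X0 \<subseteq> verts H2 \<inter> T2" using X0 unfolding is_fvs_def by simp
    have X0f: "forest (del_verts (induced H2 T2) X0)" using X0 unfolding is_fvs_def by blast
    have C2f: "forest (del_verts H2 C)" using fvsC2 unfolding is_fvs_def by blast
    have "is_fvs H2 Y"
      unfolding is_fvs_def
    proof
      show "Y \<subseteq> verts H2" using X0sub CV2 unfolding Y_def by auto
      show "forest (del_verts H2 Y)"
        unfolding forest_def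
      proof (intro notI, elim exE)
        fix vs es assume cyc: "is_cycle (del_verts H2 Y) vs es"
        have sv: "set vs \<subseteq> verts H2 - Y" using cyc unfolding is_cycle_def by auto
        have seH: "set es \<subseteq> edges H" using cyc unfolding is_cycle_def by auto
        have se: "\<forall>e\<in>set es. e \<in> edges H2 \<and> endpts H2 e = endpts (del_verts H2 Y) e"
          using cyc unfolding is_cycle_def by auto
        have ne: "vs \<noteq> []" using cyc unfolding is_cycle_def by auto
        have inc: "set vs \<subseteq> comp_of H2 (vs ! 0)" using cycle_in_comp[OF wfH2 cyc _ se] sv by blast
        have epv: "\<And>e. e \<in> set es \<Longrightarrow> endpts H e \<subseteq> set vs" using cycle_endpts[OF cyc] by simp
        show False
        proof (cases "comp_of H2 (vs ! 0) = T2")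
          case True
          have "is_cycle (del_verts (induced H2 T2) X0) vs es"
          proof (rule cycle_transfer[OF cyc])
            show "set vs \<subseteq> verts (del_verts (induced H2 T2) X0)" using sv inc True unfolding Y_def by (auto simp: del_simps)
            show "\<forall>e\<in>set es. e \<in> edges (del_verts (induced H2 T2) X0) \<and> endpts (del_verts (induced H2 T2) X0) e = endpts (del_verts H2 Y) e"
            proof
              fix e assume e: "e \<in> set es"
              have "endpts H e \<subseteq> verts H2 \<inter> T2 - X0" using epv[OF e] sv inc True unfolding Y_def by auto
              then show "e \<in> edges (del_verts (induced H2 T2) X0) \<and> endpts (del_verts (induced H2 T2) X0) e = endpts (del_verts H2 Y) e"
                using e seH by (auto simp: del_simps)
            qed
          qed
          then show False using X0f unfolding forest_def by blast
        next
          case False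
          have v0: "vs ! 0 \<in> verts H2" using sv ne by (auto simp: subset_iff)
          have dj: "comp_of H2 (vs ! 0) \<inter> T2 = {}"
            using False comps_disj[OF comp_mem[OF v0] T2] by blast
          have svC: "set vs \<subseteq> verts H2 - C" using sv inc dj unfolding Y_def by blast
          have "is_cycle (del_verts H2 C) vs es"
          proof (rule cycle_transfer[OF cyc])
            show "set vs \<subseteq> verts (del_verts H2 C)" using svC by (auto simp: del_simps)
            show "\<forall>e\<in>set es. e \<in> edges (del_verts H2 C) \<and> endpts (del_verts H2 C) e = endpts (del_verts H2 Y) e"
            proof
              fix e assume e: "e \<in> set es"
              have "endpts H e \<subseteq> verts H2 - C" using epv[OF e] svC by auto
              then show "e \<in> edges (del_verts H2 C) \<and> endpts (del_verts H2 C) e = endpts (del_verts H2 Y) e"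
                using e seH by (auto simp: del_simps)
            qed
          qed
          then show False using C2f unfolding forest_def by blast
        qed
      qed
    qed
    then have "fvs H2 \<le> card Y" using fvs_le finH2 by blast
    also have "card Y \<le> card (C - T2) + card X0" unfolding Y_def by (rule card_Un_le)
    finally have a1: "card C \<le> card (C - T2) + card X0" using fvs_H2 by simp
    have "card C = card (C - T2) + card (C \<inter> T2)"
    proof -
      have "C = (C - T2) \<union> (C \<inter> T2)" by blast
      moreover have "card ((C - T2) \<union> (C \<inter> T2)) = card (C - T2) + card (C \<inter> T2)"
        by (rule card_Un_disjoint) (use finC in auto)
      ultimately show ?thesis by simp
    qed
    then show False using a1 X0 nle by linarith
  qed
  show ?thesis using up lo le by simp
qed


lemma KD_le: "card (KD c) \<le> z" using KD_prop by simp
lemma KA_le: "card (KA p) \<le> Suc z" using KA_prop by simp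

lemma partners:
  assumes c: "c \<in> C"
  shows "card {p \<in> {p \<in> P2. Ap p \<noteq> {}}. c \<in> p} \<le> z - 1"
proof -
  let ?T = "comp_of H c"
  have cV: "c \<in> verts H" using c CV by auto
  have sub: "{p \<in> {p \<in> P2. Ap p \<noteq> {}}. c \<in> p} \<subseteq> (\<lambda>c'. {c, c'}) ` (C \<inter> ?T - {c})"
  proof
    fix p assume p: "p \<in> {p \<in> {p \<in> P2. Ap p \<noteq> {}}. c \<in> p}"
    then have pC: "p \<subseteq> C" "card p = 2" "c \<in> p" "Ap p \<noteq> {}" unfolding P2_def by auto
    then obtain x y where xy: "p = {x, y}" "x \<noteq> y" by (meson card_2_iff)
    then obtain c' where c': "p = {c, c'}" "c' \<noteq> c" using pC(3) by blast
    obtain K where K: "K \<in> Ap p" using pC(4) by blast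
    then have KT: "K \<in> Trees" unfolding Ap_def by blast
    obtain e where e: "e \<in> edges H" "c \<in> endpts H e" "endpts H e \<inter> K \<noteq> {}"
      using K c' unfolding Ap_def by blast
    obtain e' b where e': "e' \<in> edges H" "c' \<in> endpts H e'" "b \<in> endpts H e'" "b \<in> K"
      using K c' unfolding Ap_def by blast
    have "K \<subseteq> ?T" using tree_in_comp[OF KT e] .
    then have "b \<in> ?T" using e' by blast
    moreover have "adj H b c'" unfolding adj_def using e' by blast
    ultimately have "c' \<in> ?T" using comp_closed[OF wfH] by blast
    moreover have "c' \<in> C" using c' pC by blast
    ultimately show "p \<in> (\<lambda>c'. {c, c'}) ` (C \<inter> ?T - {c})" using c' by blast
  qed
  have "card {p \<in> {p \<in> P2. Ap p \<noteq> {}}. c \<in> p} \<le> card ((\<lambda>c'. {c, c'}) ` (C \<inter> ?T - {c}))"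
    by (rule card_mono) (use finC sub in auto)
  also have "\<dots> \<le> card (C \<inter> ?T - {c})" by (rule card_image_le) (use finC in auto)
  also have "\<dots> = card (C \<inter> ?T) - 1" using c cV comp_self[of c H] finC by simp
  also have "\<dots> \<le> z - 1"
  proof -
    have "card (C \<inter> ?T) \<le> z" using compH comp_mem[of c H] cV by blast
    then show ?thesis by (rule diff_le_mono)
  qed
  finally show ?thesis .
qed

lemma z_pos: "C \<noteq> {} \<Longrightarrow> 1 \<le> z"
proof -
  assume "C \<noteq> {}"
  then obtain c where c: "c \<in> C" by blast
  then have cV: "c \<in> verts H" using CV by auto
  have "c \<in> C \<inter> comp_of H c" using c comp_self[OF cV] by blast
  then have "1 \<le> card (C \<inter> comp_of H c)" using finC by (metis One_nat_def Suc_leI card_gt_0_iff empty_iff finite_Int)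
  also have "\<dots> \<le> z" using compH comp_mem[of c H] cV by simp
  finally show ?thesis .
qed

lemma count_Kept: "real (card Kept) \<le> real (card C) / 2 * (real z ^ 2 + 2 * real z - 1)"
proof -
  define Q where "Q = {p \<in> P2. Ap p \<noteq> {}}"
  have finQ: "finite Q" unfolding Q_def P2_def using finC by (auto intro: finite_subset[of _ "Pow C"])
  have "card (\<Union>c\<in>C. KD c) \<le> (\<Sum>c\<in>C. card (KD c))" using card_UN_le finC by blast
  also have "\<dots> \<le> (\<Sum>c\<in>C. z)" using KD_le by (intro sum_mono) auto
  finally have k1: "card (\<Union>c\<in>C. KD c) \<le> card C * z" by simp
  have "(\<Union>p\<in>P2. KA p) = (\<Union>p\<in>Q. KA p)"
  proof -
    have "KA p = {}" if "p \<notin> Q" "p \<in> P2" for p using that KA_prop unfolding Q_def by blast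
    then show ?thesis unfolding Q_def by blast
  qed
  then have "card (\<Union>p\<in>P2. KA p) \<le> (\<Sum>p\<in>Q. card (KA p))" using card_UN_le finQ by metis
  also have "\<dots> \<le> (\<Sum>p\<in>Q. Suc z)" using KA_le by (intro sum_mono) auto
  finally have k2: "card (\<Union>p\<in>P2. KA p) \<le> card Q * Suc z" by simp
  have "card Kept \<le> card (\<Union>c\<in>C. KD c) + card (\<Union>p\<in>P2. KA p)" unfolding Kept_def by (rule card_Un_le)
  then have k: "card Kept \<le> card C * z + card Q * Suc z" using k1 k2 by linarith
  have mc: "(\<Sum>c\<in>C. card {p \<in> Q. c \<in> p}) = 2 * card Q"
  proof (rule sum_multicount[OF finC finQ])
    show "\<forall>p\<in>Q. card {c \<in> C. c \<in> p} = 2"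
    proof
      fix p assume "p \<in> Q"
      then have "p \<subseteq> C" "card p = 2" unfolding Q_def P2_def by auto
      moreover then have "{c \<in> C. c \<in> p} = p" by blast
      ultimately show "card {c \<in> C. c \<in> p} = 2" by simp
    qed
  qed
  have "(\<Sum>c\<in>C. card {p \<in> Q. c \<in> p}) \<le> (\<Sum>c\<in>C. z - 1)"
    using partners unfolding Q_def by (intro sum_mono) auto
  then have q: "2 * card Q \<le> card C * (z - 1)" using mc by simp
  show ?thesis
  proof (cases "z = 0")
    case True
    then have "C = {}" using z_pos by (metis not_one_le_zero)
    then have "card Q = 0" using q by simp
    then show ?thesis using k True \<open>C = {}\<close> by simp
  next
    case False
    then have rz: "real (z - 1) = real z - 1" by simp
    have q': "2 * real (card Q) \<le> real (card C) * (real z - 1)"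
      using q rz by (metis of_nat_le_iff of_nat_mult of_nat_numeral)
    have "real (card Kept) \<le> real (card C) * real z + real (card Q) * (real z + 1)"
      using k by (metis (mono_tags, lifting) of_nat_Suc of_nat_add of_nat_le_iff of_nat_mult add.commute)
    also have "real (card Q) * (real z + 1) \<le> (real (card C) * (real z - 1) / 2) * (real z + 1)"
      using q' by (intro mult_right_mono) auto
    finally have "real (card Kept) \<le> real (card C) * real z + (real (card C) * (real z - 1) / 2) * (real z + 1)"
      by linarith
    also have "\<dots> = real (card C) / 2 * (real z ^ 2 + 2 * real z - 1)"
      by (simp add: field_simps power2_eq_square)
    finally show ?thesis .
  qed
qed

lemma Kept_sub: "\<Union>Kept \<subseteq> verts H - C" using Kept_Trees Trees_sub by blast

end



lemma comps_union:
  assumes wf: "wf_mgraph G" and S: "SS \<subseteq> components (induced G F)"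
  shows "components (induced G (\<Union>SS)) = SS"
proof -
  let ?GF = "induced G F" and ?G' = "induced G (\<Union>SS)"
  have wfF: "wf_mgraph ?GF" using wf_induced wf by blast
  have UF: "\<Union>SS \<subseteq> verts G \<inter> F"
  proof
    fix x assume "x \<in> \<Union>SS"
    then obtain S0 where S0: "S0 \<in> SS" "x \<in> S0" by blast
    then have "S0 \<subseteq> verts ?GF" using S comps_sub[of S0 ?GF] by blast
    then have "S0 \<subseteq> verts G \<inter> F" by simp
    then show "x \<in> verts G \<inter> F" using S0 by blast
  qed
  have eq: "comp_of ?G' u = comp_of ?GF u" if u: "u \<in> \<Union>SS" for u
  proof
    show "comp_of ?G' u \<subseteq> comp_of ?GF u"
    proof
      fix v assume v: "v \<in> comp_of ?G' u"
      then have v1: "v \<in> verts ?G'" and r1: "(adj ?G')\<^sup>*\<^sup>* u v" unfolding comp_of_def by blast+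
      have v2: "v \<in> verts ?GF" using v1 UF by (simp add: subset_iff)
      have "(adj ?GF)\<^sup>*\<^sup>* u v"
      proof (rule reach_mono[of ?G' ?GF])
        have "\<Union>SS \<subseteq> F" using UF by blast
        then show "edges ?G' \<subseteq> edges ?GF" by (simp add: subset_iff)
        show "\<forall>e\<in>edges ?G'. endpts ?G' e = endpts ?GF e" by simp
        show "(adj ?G')\<^sup>*\<^sup>* u v" using r1 .
      qed
      then show "v \<in> comp_of ?GF u" unfolding comp_of_def using v2 by blast
    qed
    obtain S0 where S0: "S0 \<in> SS" "u \<in> S0" using u by blast
    have S0GF: "S0 \<in> components ?GF" using S0(1) S by blast
    have S0c: "S0 = comp_of ?GF u" using comp_in[OF S0GF S0(2)] .
    show "comp_of ?GF u \<subseteq> comp_of ?G' u"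
    proof
      fix v assume v: "v \<in> comp_of ?GF u"
      then have "(adj ?GF)\<^sup>*\<^sup>* u v" unfolding comp_of_def by blast
      then have "v \<in> S0 \<and> (adj ?G')\<^sup>*\<^sup>* u v"
      proof (induction rule: rtranclp_induct)
        case base then show ?case using S0 by simp
      next
        case (step y x)
        obtain e where e: "e \<in> edges ?GF" "y \<in> endpts G e" "x \<in> endpts G e"
          using step.hyps(2) unfolding adj_def by auto
        have yS0: "y \<in> comp_of ?GF u" using step.IH S0c by blast
        have sub: "endpts G e \<subseteq> S0"
        proof
          fix w assume w: "w \<in> endpts G e"
          have "adj ?GF y w" unfolding adj_def using e w by auto
          then have "w \<in> comp_of ?GF u" using comp_closed[OF wfF yS0] by blast
          then show "w \<in> S0" using S0c by blast
        qed
        have "S0 \<subseteq> \<Union>SS" using S0(1) by blast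
        then have "e \<in> edges ?G'" using e(1) sub by simp
        then have "adj ?G' y x" unfolding adj_def using e by auto
        moreover have "x \<in> S0" using sub e(3) by blast
        ultimately show ?case using step.IH by (meson rtranclp.rtrancl_into_rtrancl)
      qed
      moreover have "v \<in> verts G" using v comp_sub[of ?GF u] by auto
      ultimately show "v \<in> comp_of ?G' u" using S0 unfolding comp_of_def by auto
    qed
  qed
  show ?thesis
  proof
    show "components ?G' \<subseteq> SS"
    proof
      fix T assume "T \<in> components ?G'"
      then obtain u where u: "u \<in> verts ?G'" "T = comp_of ?G' u" unfolding components_eq by blast
      then have uS: "u \<in> \<Union>SS" by simp
      then obtain S0 where S0: "S0 \<in> SS" "u \<in> S0" by blast
      have S0GF: "S0 \<in> components ?GF" using S0(1) S by blast
      have "S0 = comp_of ?GF u" using comp_in[OF S0GF S0(2)] .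
      then show "T \<in> SS" using u(2) eq[OF uS] S0(1) by simp
    qed
    show "SS \<subseteq> components ?G'"
    proof
      fix S0 assume S0: "S0 \<in> SS"
      then have S0GF: "S0 \<in> components ?GF" using S by blast
      then obtain u where u: "u \<in> S0" using comps_ne by blast
      have uS: "u \<in> \<Union>SS" using u S0 by blast
      have "S0 = comp_of ?GF u" using comp_in[OF S0GF u] .
      then have "S0 = comp_of ?G' u" using eq[OF uS] by simp
      moreover have "u \<in> verts ?G'" using uS UF by auto
      ultimately show "S0 \<in> components ?G'" using comp_mem[of u ?G'] by simp
    qed
  qed
qed

theorem lemma14:
  fixes G :: "('v, 'e) mgraph" and z :: nat and C F :: "'v set"
  assumes "wf_mgraph G"
    and "z_antler G z C F"
  shows "\<exists>F' \<subseteq> F. z_antler G z C F' \<and>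
           real (card (components (induced G F'))) \<le>
             real (card C) / 2 * (real z ^ 2 + 2 * real z - 1)"
proof -
  have wfG: "wf_mgraph G" by fact
  from assms(2) obtain H where A: "antler G C F" and cert: "certificate_of_order (induced G (C \<union> F)) C z H"
    unfolding z_antler_def by blast
  have CG: "C \<subseteq> verts G" and FG: "F \<subseteq> verts G" and CF: "C \<inter> F = {}" and forF: "forest (induced G F)"
    and ecut: "\<forall>T\<in>components (induced G F). e_between G T (verts G - (C \<union> F)) \<le> 1"
    using A unfolding antler_def FVC_def by blast+
  have sg: "subgraph H (induced G (C \<union> F))" and mf: "min_fvs H C"
    and cH: "\<forall>T\<in>components H. fvs (induced H T) = card (C \<inter> T) \<and> card (C \<inter> T) \<le> z"
    using cert unfolding certificate_of_order_def certificate_def by blast+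
  have sg1: "verts H \<subseteq> verts (induced G (C \<union> F))" "edges H \<subseteq> edges (induced G (C \<union> F))"
    "\<forall>e\<in>edges H. endpts H e = endpts (induced G (C \<union> F)) e \<and> endpts (induced G (C \<union> F)) e \<subseteq> verts H"
    using sg unfolding subgraph_def by blast+
  have vH: "verts H \<subseteq> verts G \<inter> (C \<union> F)" using sg1(1) by simp
  have eH: "e \<in> edges G \<and> endpts G e \<subseteq> C \<union> F \<and> endpts H e = endpts G e \<and> endpts G e \<subseteq> verts H"
    if e: "e \<in> edges H" for e
  proof -
    have "e \<in> edges (induced G (C \<union> F))" using sg1(2) e by blast
    then have "e \<in> edges G" "endpts G e \<subseteq> C \<union> F" by simp_all
    moreover have "endpts H e = endpts G e" "endpts G e \<subseteq> verts H" using sg1(3) e by simp_all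
    ultimately show ?thesis by blast
  qed
  have wfH: "wf_mgraph H"
    unfolding wf_mgraph_def
  proof (intro conjI ballI)
    have "finite (verts G)" using wfG unfolding wf_mgraph_def by blast
    then show "finite (verts H)" using vH finite_subset by blast
    have "edges H \<subseteq> edges G" using eH by blast
    moreover have "finite (edges G)" using wfG unfolding wf_mgraph_def by blast
    ultimately show "finite (edges H)" using finite_subset by blast
    fix e assume e: "e \<in> edges H"
    show "endpts H e \<subseteq> verts H" using eH[OF e] by simp
    have eG: "e \<in> edges G" and epe: "endpts H e = endpts G e" using eH[OF e] by blast+
    have "endpts G e \<noteq> {} \<and> card (endpts G e) \<le> 2" using wfG eG unfolding wf_mgraph_def by blast
    then show "endpts H e \<noteq> {}" "card (endpts H e) \<le> 2" using epe by simp_all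
  qed
  have fvsC: "is_fvs H C" using mf unfolding min_fvs_def by blast
  interpret ctx H C z using wfH fvsC cH by unfold_locales
  define SS where "SS = {S \<in> components (induced G F). S \<inter> \<Union>Kept \<noteq> {}}"
  define F' where "F' = \<Union>SS"
  have wfGF: "wf_mgraph (induced G F)" using wf_induced wfG by blast
  have KF: "\<Union>Kept \<subseteq> F" using Kept_sub vH by blast
  have F'F: "F' \<subseteq> F"
  proof
    fix x assume "x \<in> F'"
    then obtain S where S: "S \<in> SS" "x \<in> S" unfolding F'_def by blast
    then have "S \<in> components (induced G F)" unfolding SS_def by blast
    then have "S \<subseteq> verts G \<inter> F" using comps_sub[of S "induced G F"] by simp
    then show "x \<in> F" using S by blast
  qed
  have KF': "\<Union>Kept \<subseteq> F'"
  proof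
    fix x assume x: "x \<in> \<Union>Kept"
    have "x \<in> verts H" using x Kept_sub by blast
    then have xv: "x \<in> verts (induced G F)" using KF x vH by simp blast
    have "x \<in> comp_of (induced G F) x" using comp_self[OF xv] .
    moreover have "comp_of (induced G F) x \<in> components (induced G F)" using comp_mem[OF xv] .
    ultimately have "comp_of (induced G F) x \<in> SS" unfolding SS_def using x by blast
    then show "x \<in> F'" unfolding F'_def using comp_self[OF xv] by blast
  qed
  have compsF': "components (induced G F') = SS"
    unfolding F'_def by (rule comps_union[OF wfG]) (unfold SS_def, blast)
  have fvc: "FVC G C F'"
    unfolding FVC_def
  proof (intro conjI)
    show "C \<subseteq> verts G" by fact
    show "F' \<subseteq> verts G" using F'F FG by blast
    show "C \<inter> F' = {}" using F'F CF by blast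
    show "forest (induced G F')"
    proof (rule forest_sub[OF forF])
      show "verts (induced G F') \<subseteq> verts (induced G F)" using F'F by (simp add: subset_iff)
      show "edges (induced G F') \<subseteq> edges (induced G F)" using F'F by (simp add: subset_iff)
      show "\<forall>e\<in>edges (induced G F'). endpts (induced G F') e = endpts (induced G F) e" by simp
    qed
    show "\<forall>T\<in>components (induced G F'). e_between G T (verts G - (C \<union> F')) \<le> 1"
    proof
      fix T assume "T \<in> components (induced G F')"
      then have TS: "T \<in> SS" using compsF' by simp
      then have T: "T \<in> components (induced G F)" "T \<subseteq> F'" unfolding F'_def SS_def by auto
      have "{e \<in> edges G. endpts G e \<inter> T \<noteq> {} \<and> endpts G e \<inter> (verts G - (C \<union> F')) \<noteq> {}}
          \<subseteq> {e \<in> edges G. endpts G e \<inter> T \<noteq> {} \<and> endpts G e \<inter> (verts G - (C \<union> F)) \<noteq> {}}"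
      proof
        fix e assume "e \<in> {e \<in> edges G. endpts G e \<inter> T \<noteq> {} \<and> endpts G e \<inter> (verts G - (C \<union> F')) \<noteq> {}}"
        then obtain s x where e: "e \<in> edges G" "s \<in> endpts G e" "s \<in> T" "x \<in> endpts G e" "x \<in> verts G" "x \<notin> C" "x \<notin> F'"
          by blast
        have "x \<notin> F"
        proof
          assume xF: "x \<in> F"
          have sx: "s \<noteq> x" using e T by blast
          have "s \<in> F" using T F'F e by blast
          then have "endpts G e = {s, x}" using endpts_two[OF wfG e(1) e(2) e(4) sx] by simp
          then have "endpts G e \<subseteq> F" using xF \<open>s \<in> F\<close> by simp
          then have "e \<in> edges (induced G F)" using e(1) by simp
          then have "adj (induced G F) s x" unfolding adj_def using e(2,4) by (simp only: induced_simps(3)) blast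
          moreover have "T = comp_of (induced G F) s" by (rule comp_in[OF T(1) e(3)])
          moreover have "s \<in> comp_of (induced G F) s" using calculation(2) e(3) by simp
          ultimately have "x \<in> T" using comp_closed[OF wfGF, of s s x] by simp
          then show False using T e by blast
        qed
        then show "e \<in> {e \<in> edges G. endpts G e \<inter> T \<noteq> {} \<and> endpts G e \<inter> (verts G - (C \<union> F)) \<noteq> {}}"
          using e by blast
      qed
      moreover have "finite {e \<in> edges G. endpts G e \<inter> T \<noteq> {} \<and> endpts G e \<inter> (verts G - (C \<union> F)) \<noteq> {}}"
        using wfG unfolding wf_mgraph_def by simp
      ultimately have "e_between G T (verts G - (C \<union> F')) \<le> e_between G T (verts G - (C \<union> F))"
        unfolding e_between_def using card_mono by blast
      moreover have "e_between G T (verts G - (C \<union> F)) \<le> 1" using ecut T(1) by blast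
      ultimately show "e_between G T (verts G - (C \<union> F')) \<le> 1" by linarith
    qed
  qed
  have WCF: "W \<subseteq> C \<union> F'" unfolding W_def using KF' by blast
  have sg2: "subgraph H2 (induced G (C \<union> F'))"
    unfolding subgraph_def
  proof (intro conjI ballI)
    have "verts H \<inter> W \<subseteq> verts G \<inter> (C \<union> F')" using vH WCF by blast
    then show "verts H2 \<subseteq> verts (induced G (C \<union> F'))" by simp
    show "edges H2 \<subseteq> edges (induced G (C \<union> F'))"
    proof
      fix e assume "e \<in> edges H2"
      then have e: "e \<in> edges H" "endpts H e \<subseteq> W" by auto
      have "e \<in> edges G" "endpts H e = endpts G e" using eH[OF e(1)] by blast+
      then show "e \<in> edges (induced G (C \<union> F'))" using e WCF by auto
    qed
    fix e assume "e \<in> edges H2"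
    then have e: "e \<in> edges H" "endpts H e \<subseteq> W" by auto
    have ee: "endpts H e = endpts G e" "endpts G e \<subseteq> verts H" using eH[OF e(1)] by blast+
    show "endpts H2 e = endpts (induced G (C \<union> F')) e" using ee by simp
    show "endpts (induced G (C \<union> F')) e \<subseteq> verts H2" using ee e by auto
  qed
  have wfCF: "wf_mgraph (induced G (C \<union> F'))" using wf_induced wfG by blast
  have "fvs H2 \<le> fvs (induced G (C \<union> F'))" by (rule fvs_mono[OF sg2 wfCF])
  then have "card C \<le> fvs (induced G (C \<union> F'))" using fvs_H2 by linarith
  then have ant: "antler G C F'"
    unfolding antler_def using fvc by blast
  have cert2: "certificate (induced G (C \<union> F')) C H2"
    unfolding certificate_def using sg2 minfvs_H2 by blast
  have cT2: "\<forall>T\<in>components H2. fvs (induced H2 T) = card (C \<inter> T) \<and> card (C \<inter> T) \<le> z"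
    using comps_H2 by blast
  have "certificate_of_order (induced G (C \<union> F')) C z H2"
    unfolding certificate_of_order_def using cert2 cT2 by blast
  then have za: "z_antler G z C F'"
    unfolding z_antler_def using ant by blast
  have "card (components (induced G F')) \<le> card Kept"
  proof -
    define f where "f = (\<lambda>K. comp_of (induced G F) (SOME x. x \<in> K))"
    have "SS \<subseteq> f ` Kept"
    proof
      fix S assume S: "S \<in> SS"
      then obtain K v where Kv: "K \<in> Kept" "v \<in> K" "v \<in> S" unfolding SS_def by blast
      have KT: "K \<in> Trees" using Kv Kept_Trees by blast
      define y where "y = (SOME x. x \<in> K)"
      have y: "y \<in> K" unfolding y_def using Kv by (metis someI_ex)
      have "(adj HC)\<^sup>*\<^sup>* y v" using tree_reach[OF KT y Kv(2)] .
      moreover have "\<And>a b. adj HC a b \<Longrightarrow> adj (induced G F) a b"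
      proof -
        fix a b assume "adj HC a b"
        then obtain e where e: "e \<in> edges H" "endpts H e \<subseteq> verts H - C" "a \<in> endpts H e" "b \<in> endpts H e"
          unfolding adj_def by (auto simp: del_simps)
        have ee: "e \<in> edges G" "endpts H e = endpts G e" using eH[OF e(1)] by blast+
        have "endpts G e \<subseteq> F" using e(2) ee(2) vH by blast
        then have "e \<in> edges (induced G F)" using ee(1) by simp
        then show "adj (induced G F) a b" unfolding adj_def using e(3,4) ee(2) by (simp only: induced_simps(3)) metis
      qed
      ultimately have r: "(adj (induced G F))\<^sup>*\<^sup>* y v" using mono_rtranclp[of "adj HC" "adj (induced G F)"] by blast
      have SG: "S \<in> components (induced G F)" using S unfolding SS_def by blast
      have SC: "S = comp_of (induced G F) v" by (rule comp_in[OF SG Kv(3)])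
      have "v \<in> verts (induced G F)" using comps_sub[OF SG] Kv(3) by blast
      then have "v \<in> comp_of (induced G F) y" using r unfolding comp_of_def by blast
      then have "comp_of (induced G F) v = comp_of (induced G F) y" by (rule comp_of_eq)
      then have "comp_of (induced G F) y = S" using SC by simp
      then show "S \<in> f ` Kept" unfolding f_def y_def using Kv(1) by blast
    qed
    moreover have "finite Kept" using Kept_Trees finTrees finite_subset by blast
    ultimately have "card SS \<le> card (f ` Kept)" using card_mono finite_imageI by blast
    also have "\<dots> \<le> card Kept" using \<open>finite Kept\<close> by (rule card_image_le)
    finally have "card SS \<le> card Kept" .
    then show ?thesis using compsF' by simp
  qed
  then have "real (card (components (induced G F'))) \<le> real (card C) / 2 * (real z ^ 2 + 2 * real z - 1)"
    using count_Kept of_nat_le_iff[of "card (components (induced G F'))" "card Kept", where 'a=real] by linarith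
  then show ?thesis using F'F za by blast
qed

end
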